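(* Let $c$ be $p$-homogeneous for some $p>0$, and let $m_i=\rho_i\,dx_i$ with $\rho_i$ $r_i$-homogeneous, $r_i\ge0$. Let $(\Phi_1,\dots,\Phi_N)$ maximize $\mathcal{BS}_{\alpha,m}$ over all admissible tuples (or over all admissible tuples of even functions), with $0<\mathcal{BS}_{\alpha,m}(\Phi_1,\dots,\Phi_N)<\infty$, and let $\mu_i=e^{-\alpha_i\Phi_i}m_i/\int e^{-\alpha_i\Phi_i}dm_i$. Then $$\sum_{i=1}^N\int\Phi_i\,d\mu_i=\sum_{i=1}^N\frac{n+r_i}{p\alpha_i},\qquad \sum_{i=1}^N\alpha_i\mathrm{Var}_{\mu_i}(\Phi_i)\le\sum_{i=1}^N\frac{n+r_i}{p\alpha_i}.$$ Moreover, if $\gamma$ is a probability measure on $(\mathbb{R}^n)^N$ with marginals $\mu_i$ such that $\sum_i\Phi_i(x_i)=c(x)$ for $\gamma$-a.e. $x$, then $\int c\,d\gamma=\sum_i\frac{n+r_i}{p\alpha_i}$ and $$\mathrm{Var}_\gamma(c)\le\Bigl(\sum_{i=1}^N\frac1{\alpha_i}\Bigr)\sum_{i=1}^N\alpha_i\mathrm{Var}_{\mu_i}(\Phi_i),$$ with equality if and only if $\alpha_i(\Phi_i(x_i)-\int\Phi_i d\mu_i)=\alpha_j(\Phi_j(x_j)-\int\Phi_jd\mu_j)$ for all $i,j$ and $\gamma$-a.e. $x$.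
   Context: Points of $(\mathbb{R}^n)^N$ are $x=(x_1,\dots,x_N)$. $c$ is $p$-homogeneous if $c(tx)=t^pc(x)$ for all $t\ge0$, $x$. A density $\rho$ is $r$-homogeneous if $\rho(tx)=t^r\rho(x)$ for $t>0$. A tuple $(V_i)$, $V_i:\mathbb{R}^n\to(-\infty,+\infty]$, is admissible if $\sum_iV_i(x_i)\ge c(x)$ for all $x$. $\mathcal{BS}_{\alpha,m}(V_1,\dots,V_N)=\prod_i(\int e^{-\alpha_iV_i}dm_i)^{1/\alpha_i}$ with fixed $\alpha_i>0$. $\mathrm{Var}_\mu f=\int f^2d\mu-(\int fd\mu)^2$. *)

theory Defs
  imports "HOL-Analysis.Analysis" "HOL-Probability.Probability"
begin

text \<open>Points of (R^n)^N are modelled as \<open>real^'n^'k\<close>, with n = CARD('n), N = CARD('k);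
  the i-th component x_i is \<open>x $ i\<close>.\<close>

definition homogeneous_cost :: "real \<Rightarrow> ('a::real_vector \<Rightarrow> real) \<Rightarrow> bool" where
  "homogeneous_cost p c \<longleftrightarrow> (\<forall>t x. t \<ge> 0 \<longrightarrow> c (t *\<^sub>R x) = t powr p * c x)"

definition homogeneous_density :: "real \<Rightarrow> ('a::real_vector \<Rightarrow> real) \<Rightarrow> bool" where
  "homogeneous_density r \<rho> \<longleftrightarrow> (\<forall>t x. t > 0 \<longrightarrow> \<rho> (t *\<^sub>R x) = t powr r * \<rho> x)"

definition admissible ::
  "(real^'n^'k \<Rightarrow> real) \<Rightarrow> ('k \<Rightarrow> real^'n \<Rightarrow> ereal) \<Rightarrow> bool" where
  "admissible c V \<longleftrightarrow> (\<forall>i x. V i x \<noteq> -\<infinity>) \<and>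
     (\<forall>x. (\<Sum>i\<in>UNIV. V i (x $ i)) \<ge> ereal (c x))"

definition expneg :: "real \<Rightarrow> ereal \<Rightarrow> ennreal" where
  "expneg a v = (if v = \<infinity> then 0 else ennreal (exp (- a * real_of_ereal v)))"

definition enn_powr :: "ennreal \<Rightarrow> real \<Rightarrow> ennreal" where
  "enn_powr z a = (if z = \<infinity> then \<infinity> else ennreal (enn2real z powr a))"

definition BS :: "('k::finite \<Rightarrow> real) \<Rightarrow> ('k \<Rightarrow> 'a measure) \<Rightarrow> ('k \<Rightarrow> 'a \<Rightarrow> ereal) \<Rightarrow> ennreal" where
  "BS \<alpha> m V = (\<Prod>i\<in>UNIV. enn_powr (\<integral>\<^sup>+ x. expneg (\<alpha> i) (V i x) \<partial>m i) (1 / \<alpha> i))"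

definition Var :: "'a measure \<Rightarrow> ('a \<Rightarrow> real) \<Rightarrow> real" where
  "Var M f = (\<integral>x. (f x)\<^sup>2 \<partial>M) - (\<integral>x. f x \<partial>M)\<^sup>2"

end

theory Submission
  imports Defs
begin

lemma pred_eq_infty_ereal[measurable]: "Measurable.pred borel (\<lambda>v::ereal. v = \<infinity>)"
proof -
  have "{v::ereal. v = \<infinity>} \<in> sets borel" by (simp add: borel_closed)
  then show ?thesis by (simp add: pred_def)
qed

lemma expneg_borel[measurable]: "expneg a \<in> borel_measurable borel"
  unfolding expneg_def[abs_def] by measurable

lemma expneg_meas[measurable]:
  "f \<in> borel_measurable M \<Longrightarrow> (\<lambda>x. expneg a (f x)) \<in> borel_measurable M"
  by measurable

lemma expneg_scale:
  assumes "s > 0" shows "expneg a (ereal s * v) = expneg (a * s) v"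
  using assms by (cases v) (auto simp: expneg_def mult_ac)

lemma scale_nn_integral:
  fixes r :: real and \<rho> :: "'a::euclidean_space \<Rightarrow> real" and \<Phi> :: "'a \<Rightarrow> ereal"
  assumes t: "t > 0" and [measurable]: "\<rho> \<in> borel_measurable borel" "\<Phi> \<in> borel_measurable borel"
    and nn: "\<And>x. \<rho> x \<ge> 0"
    and hom: "\<And>x. \<rho> (t *\<^sub>R x) = t powr r * \<rho> x"
  shows "(\<integral>\<^sup>+x. expneg a (ereal (t powr p) * \<Phi> ((1/t) *\<^sub>R x)) \<partial>density lborel (\<lambda>x. ennreal (\<rho> x)))
    = ennreal (t powr (real DIM('a) + r)) * (\<integral>\<^sup>+y. expneg (a * t powr p) (\<Phi> y) \<partial>density lborel (\<lambda>x. ennreal (\<rho> x)))"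
proof -
  have "(\<integral>\<^sup>+x. expneg a (ereal (t powr p) * \<Phi> ((1/t) *\<^sub>R x)) \<partial>density lborel (\<lambda>x. ennreal (\<rho> x)))
     = (\<integral>\<^sup>+x. ennreal (\<rho> x) * expneg a (ereal (t powr p) * \<Phi> ((1/t) *\<^sub>R x)) \<partial>lborel)"
    by (simp add: nn_integral_density)
  also have "\<dots> = (\<integral>\<^sup>+y. ennreal (\<bar>t\<bar> ^ DIM('a)) * (ennreal (\<rho> (0 + t *\<^sub>R y)) * expneg a (ereal (t powr p) * \<Phi> ((1/t) *\<^sub>R (0 + t *\<^sub>R y)))) \<partial>lborel)"
    using t by (subst lborel_affine[of t 0]) (simp_all add: nn_integral_density nn_integral_distr)
  also have "\<dots> = (\<integral>\<^sup>+y. ennreal (t powr (real DIM('a) + r)) * (ennreal (\<rho> y) * expneg (a * t powr p) (\<Phi> y)) \<partial>lborel)"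
  proof (rule nn_integral_cong)
    fix y
    have "ennreal (\<bar>t\<bar> ^ DIM('a)) * ennreal (\<rho> (0 + t *\<^sub>R y)) = ennreal (t powr (real DIM('a) + r)) * ennreal (\<rho> y)"
      using t nn by (simp add: hom powr_add powr_realpow ennreal_mult'[symmetric] mult_ac)
    then show "ennreal (\<bar>t\<bar> ^ DIM('a)) * (ennreal (\<rho> (0 + t *\<^sub>R y)) * expneg a (ereal (t powr p) * \<Phi> ((1/t) *\<^sub>R (0 + t *\<^sub>R y))))
       = ennreal (t powr (real DIM('a) + r)) * (ennreal (\<rho> y) * expneg (a * t powr p) (\<Phi> y))"
      using t by (simp add: expneg_scale mult.assoc[symmetric])
  qed
  also have "\<dots> = ennreal (t powr (real DIM('a) + r)) * (\<integral>\<^sup>+y. ennreal (\<rho> y) * expneg (a * t powr p) (\<Phi> y) \<partial>lborel)"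
    by (simp add: nn_integral_cmult)
  also have "\<dots> = ennreal (t powr (real DIM('a) + r)) * (\<integral>\<^sup>+y. expneg (a * t powr p) (\<Phi> y) \<partial>density lborel (\<lambda>x. ennreal (\<rho> x)))"
    by (simp add: nn_integral_density)
  finally show ?thesis .
qed

lemma sum_ereal_mult_nn:
  fixes f :: "'a \<Rightarrow> ereal"
  assumes "s \<ge> 0" shows "(\<Sum>i\<in>A. ereal s * f i) = ereal s * (\<Sum>i\<in>A. f i)"
proof (induction A rule: infinite_finite_induct)
  case (insert x F)
  then show ?case using distrib_left_ereal_nn[OF assms, of "f x" "sum f F"]
    by (simp add: mult.commute)
qed auto

lemma adm_scale:
  fixes c :: "real^'n^'k \<Rightarrow> real" and \<Phi> :: "'k \<Rightarrow> real^'n \<Rightarrow> ereal"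
  assumes t: "t > 0" and ch: "homogeneous_cost p c" and adm: "admissible c \<Phi>"
  shows "admissible c (\<lambda>i x. ereal (t powr p) * \<Phi> i ((1/t) *\<^sub>R x))"
  unfolding admissible_def
proof (intro conjI allI)
  fix i x
  have "\<Phi> i ((1/t) *\<^sub>R x) \<noteq> -\<infinity>" using adm unfolding admissible_def by blast
  then show "ereal (t powr p) * \<Phi> i ((1/t) *\<^sub>R x) \<noteq> -\<infinity>"
    using t by (cases "\<Phi> i ((1/t) *\<^sub>R x)") auto
next
  fix x :: "real^'n^'k"
  let ?y = "(1/t) *\<^sub>R x"
  have "ereal (c ?y) \<le> (\<Sum>i\<in>UNIV. \<Phi> i (?y $ i))" using adm unfolding admissible_def by blast
  then have "ereal (t powr p) * ereal (c ?y) \<le> ereal (t powr p) * (\<Sum>i\<in>UNIV. \<Phi> i (?y $ i))"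
    by (rule ereal_mult_left_mono) simp
  moreover have "c ?y = (1/t) powr p * c x" using ch t by (simp add: homogeneous_cost_def)
  moreover have "t powr p * (1/t) powr p = 1" using t by (simp add: powr_divide)
  ultimately have "ereal (c x) \<le> ereal (t powr p) * (\<Sum>i\<in>UNIV. \<Phi> i (?y $ i))"
    by (simp add: mult.assoc[symmetric])
  also have "\<dots> = (\<Sum>i\<in>UNIV. ereal (t powr p) * \<Phi> i ((1/t) *\<^sub>R (x $ i)))"
    by (simp add: sum_ereal_mult_nn)
  finally show "ereal (c x) \<le> (\<Sum>i\<in>UNIV. ereal (t powr p) * \<Phi> i ((1/t) *\<^sub>R (x $ i)))" .
qed

lemma exp_taylor3: "1 + x + x\<^sup>2/2 + x^3/6 \<le> exp (x::real)"
proof -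
  obtain t where "exp x = (\<Sum>m<4. (x ^ m) / fact m) + (exp t / fact 4) * x ^ 4"
    using Maclaurin_exp_le[of x 4] by blast
  moreover have "(\<Sum>m<4. (x ^ m) / fact m) = 1 + x + x\<^sup>2/2 + x^3/6"
    by (simp add: numeral_eq_Suc fact_numeral power2_eq_square power3_eq_cube)
  moreover have "0 \<le> (exp t / fact 4) * x ^ 4"
    by (simp add: zero_le_even_power)
  ultimately show ?thesis by linarith
qed

lemma exp_ge_cube: "(x::real) \<ge> 0 \<Longrightarrow> x^3 \<le> 6 * exp x"
  using exp_taylor3[of x] zero_le_power[of x 2] by linarith

lemma exp_ge_sq: "(x::real) \<ge> 0 \<Longrightarrow> x\<^sup>2 \<le> 2 * exp x"
  using exp_taylor3[of x] zero_le_power[of x 3] by linarith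

lemma exp_ge_lin: "(x::real) \<ge> 0 \<Longrightarrow> x \<le> exp x"
  using exp_ge_add_one_self[of x] by linarith

lemma ln_lower_half:
  assumes "(h::real) \<ge> 0" shows "h - h\<^sup>2/2 \<le> ln (1 + h)"
proof -
  let ?f = "\<lambda>x::real. ln (1 + x) - x + x\<^sup>2/2"
  have "?f 0 \<le> ?f h"
  proof (rule DERIV_nonneg_imp_nondecreasing[OF assms])
    fix x :: real assume x: "0 \<le> x" "x \<le> h"
    have "DERIV ?f x :> (1/(1+x) - 1 + x)"
      using x by (auto intro!: derivative_eq_intros)
    moreover have "1/(1+x) - 1 + x = x\<^sup>2/(1+x)"
      using x by (simp add: field_simps power2_eq_square)
    moreover have "x\<^sup>2/(1+x) \<ge> 0" using x by simp
    ultimately show "\<exists>y. DERIV ?f x :> y \<and> 0 \<le> y" by auto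
  qed
  then show ?thesis by simp
qed

lemma ln_lower_u:
  assumes "(u::real) \<ge> -1/2" shows "u - 2 * u\<^sup>2 \<le> ln (1 + u)"
proof -
  have pos: "1 + u > 0" using assms by simp
  have "ln (1/(1+u)) \<le> 1/(1+u) - 1" using pos by (intro ln_le_minus_one) simp
  then have "u/(1+u) \<le> ln (1+u)" using pos by (simp add: ln_div field_simps)
  moreover have "u - 2 * u\<^sup>2 \<le> u/(1+u)"
  proof -
    have "u\<^sup>2 * (1 + 2*u) \<ge> 0" using assms by simp
    then have "(u - 2*u\<^sup>2) * (1+u) \<le> u"
      by (simp add: algebra_simps power2_eq_square)
    then show ?thesis using pos by (simp add: field_simps)
  qed
  ultimately show ?thesis by linarith
qed

lemma exp_moments:
  fixes M :: "'a measure" and \<phi> :: "'a \<Rightarrow> real"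
  assumes [measurable]: "\<phi> \<in> borel_measurable M" and a: "a > 0"
    and i1: "integrable M (\<lambda>x. exp (a * \<phi> x))" and i2: "integrable M (\<lambda>x. exp (- a * \<phi> x))"
  shows "integrable M \<phi>" "integrable M (\<lambda>x. (\<phi> x)\<^sup>2)" "integrable M (\<lambda>x. \<bar>\<phi> x - c\<bar>^3)"
proof -
  have ea: "integrable M (\<lambda>x. exp (a * \<phi> x) + exp (- a * \<phi> x))" using i1 i2 by simp
  have ia: "integrable M (\<lambda>x. exp (a * \<bar>\<phi> x\<bar>))"
  proof (rule Bochner_Integration.integrable_bound[OF ea])
    show "AE x in M. norm (exp (a * \<bar>\<phi> x\<bar>)) \<le> norm (exp (a * \<phi> x) + exp (- a * \<phi> x))"
    proof (intro AE_I2)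
      fix x
      have "exp (a * \<bar>\<phi> x\<bar>) \<le> exp (a * \<phi> x) + exp (- a * \<phi> x)"
        by (cases "\<phi> x \<ge> 0") (simp_all add: add_increasing add_increasing2)
      then show "norm (exp (a * \<bar>\<phi> x\<bar>)) \<le> norm (exp (a * \<phi> x) + exp (- a * \<phi> x))"
        by (simp add: add_nonneg_nonneg)
    qed
  qed simp
  show "integrable M \<phi>"
  proof (rule Bochner_Integration.integrable_bound[of _ "\<lambda>x. (1/a) * exp (a * \<bar>\<phi> x\<bar>)"])
    show "integrable M (\<lambda>x. (1/a) * exp (a * \<bar>\<phi> x\<bar>))" using ia by simp
    show "AE x in M. norm (\<phi> x) \<le> norm ((1/a) * exp (a * \<bar>\<phi> x\<bar>))"
    proof (intro AE_I2)
      fix x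
      have "a * \<bar>\<phi> x\<bar> \<le> exp (a * \<bar>\<phi> x\<bar>)" using a by (intro exp_ge_lin) simp
      then show "norm (\<phi> x) \<le> norm ((1/a) * exp (a * \<bar>\<phi> x\<bar>))"
        using a by (simp add: field_simps)
    qed
  qed simp
  show "integrable M (\<lambda>x. (\<phi> x)\<^sup>2)"
  proof (rule Bochner_Integration.integrable_bound[of _ "\<lambda>x. (2/a\<^sup>2) * exp (a * \<bar>\<phi> x\<bar>)"])
    show "integrable M (\<lambda>x. (2/a\<^sup>2) * exp (a * \<bar>\<phi> x\<bar>))" using ia by simp
    show "AE x in M. norm ((\<phi> x)\<^sup>2) \<le> norm ((2/a\<^sup>2) * exp (a * \<bar>\<phi> x\<bar>))"
    proof (intro AE_I2)
      fix x
      have "(a * \<bar>\<phi> x\<bar>)\<^sup>2 \<le> 2 * exp (a * \<bar>\<phi> x\<bar>)" using a by (intro exp_ge_sq) simp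
      then show "norm ((\<phi> x)\<^sup>2) \<le> norm ((2/a\<^sup>2) * exp (a * \<bar>\<phi> x\<bar>))"
        using a by (simp add: field_simps power_mult_distrib)
    qed
  qed simp
  show "integrable M (\<lambda>x. \<bar>\<phi> x - c\<bar>^3)"
  proof (rule Bochner_Integration.integrable_bound[of _ "\<lambda>x. (6 * exp (a * \<bar>c\<bar>) / a^3) * exp (a * \<bar>\<phi> x\<bar>)"])
    show "integrable M (\<lambda>x. (6 * exp (a * \<bar>c\<bar>) / a^3) * exp (a * \<bar>\<phi> x\<bar>))" using ia by simp
    show "AE x in M. norm (\<bar>\<phi> x - c\<bar>^3) \<le> norm ((6 * exp (a * \<bar>c\<bar>) / a^3) * exp (a * \<bar>\<phi> x\<bar>))"
    proof (intro AE_I2)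
      fix x
      have "(a * \<bar>\<phi> x - c\<bar>)^3 \<le> 6 * exp (a * \<bar>\<phi> x - c\<bar>)" using a by (intro exp_ge_cube) simp
      also have "exp (a * \<bar>\<phi> x - c\<bar>) \<le> exp (a * \<bar>c\<bar>) * exp (a * \<bar>\<phi> x\<bar>)"
      proof -
        have "a * \<bar>\<phi> x - c\<bar> \<le> a * \<bar>c\<bar> + a * \<bar>\<phi> x\<bar>" using a
          by (metis abs_triangle_ineq4 add.commute distrib_left mult_left_mono less_imp_le)
        then show ?thesis by (simp add: exp_add[symmetric])
      qed
      finally have "a^3 * \<bar>\<phi> x - c\<bar>^3 \<le> 6 * (exp (a * \<bar>c\<bar>) * exp (a * \<bar>\<phi> x\<bar>))"
        by (simp add: power_mult_distrib)
      then show "norm (\<bar>\<phi> x - c\<bar>^3) \<le> norm ((6 * exp (a * \<bar>c\<bar>) / a^3) * exp (a * \<bar>\<phi> x\<bar>))"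
        using a by (simp add: field_simps)
    qed
  qed simp
qed

lemma eps_le:
  fixes x y C e0 :: real
  assumes e0: "e0 > 0" and C: "C \<ge> 0" and H: "\<And>e. 0 < e \<Longrightarrow> e \<le> e0 \<Longrightarrow> x \<le> y + C * e"
  shows "x \<le> y"
proof (rule ccontr)
  assume "\<not> x \<le> y"
  then have d: "x - y > 0" by simp
  define e where "e = min e0 ((x - y) / (2 * (C + 1)))"
  have e: "0 < e" "e \<le> e0" using e0 d C by (auto simp: e_def)
  have "e \<le> (x - y) / (2 * (C + 1))" by (simp add: e_def)
  then have "C * e \<le> C * ((x - y) / (2 * (C + 1)))" by (rule mult_left_mono) (use C in auto)
  also have "\<dots> < x - y"
  proof -
    have "C * y \<le> C * x" using C d by (intro mult_left_mono) auto
    then show ?thesis using C d by (simp add: field_simps)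
  qed
  finally show False using H[OF e] by linarith
qed

lemma first_id:
  fixes S K :: real
  assumes K: "K \<ge> 0"
    and H: "\<And>h. -1/2 \<le> h \<Longrightarrow> h \<le> 1/2 \<Longrightarrow> h \<noteq> 0 \<Longrightarrow> - h * S \<le> - K * ln (1 + h)"
  shows "S = K"
proof (rule antisym)
  show "K \<le> S"
  proof (rule eps_le[of "1/2" "K/2"])
    fix e :: real assume e: "0 < e" "e \<le> 1/2"
    have "- e * S \<le> - K * ln (1 + e)" using H[of e] e by simp
    moreover have "K * (e - e\<^sup>2/2) \<le> K * ln (1 + e)" using ln_lower_half[of e] e K
      by (intro mult_left_mono) auto
    ultimately have "e * K - K * e\<^sup>2/2 \<le> e * S" by (simp add: algebra_simps)
    then have "e * (K - K/2 * e) \<le> e * S" by (simp add: algebra_simps power2_eq_square)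
    then have "K - K/2 * e \<le> S" using e by simp
    then show "K \<le> S + K/2 * e" by simp
  qed (use K in auto)
  show "S \<le> K"
  proof (rule eps_le[of "1/2" "2 * K"])
    fix e :: real assume e: "0 < e" "e \<le> 1/2"
    have "e * S \<le> - K * ln (1 - e)" using H[of "-e"] e by simp
    moreover have "- ln (1 - e) \<le> e * (1 + 2 * e)"
    proof -
      have "ln (1/(1-e)) \<le> 1/(1-e) - 1" using e by (intro ln_le_minus_one) simp
      then have "- ln (1 - e) \<le> e / (1 - e)" using e by (simp add: ln_div field_simps)
      also have "e / (1 - e) \<le> e * (1 + 2 * e)"
      proof -
        have "e \<le> e * (1 + 2 * e) * (1 - e)" using e
          by (simp add: algebra_simps power2_eq_square)
        then show ?thesis using e by (simp add: field_simps)
      qed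
      finally show ?thesis .
    qed
    ultimately have "e * S \<le> K * (e * (1 + 2 * e))"
      using mult_left_mono[OF _ K, of "- ln (1 - e)" "e * (1 + 2 * e)"] by simp
    then have "e * S \<le> e * (K + 2 * K * e)" by (simp add: algebra_simps)
    then show "S \<le> K + 2 * K * e" using e by simp
  qed (use K in auto)
qed

lemma var_term_bound:
  fixes A B e :: real
  assumes "A \<ge> 0" "B \<ge> 0" "0 < e" "e \<le> 1"
  shows "A * e\<^sup>2 - e^3 * (B + 2 * (A + B)\<^sup>2) \<le> (A * e\<^sup>2 - B * e^3) - 2 * (A * e\<^sup>2 - B * e^3)\<^sup>2"
proof -
  have e3: "e^3 \<le> e\<^sup>2" using assms by (simp add: power_decreasing)
  have e4: "e^4 \<le> e^3" using assms by (simp add: power_decreasing)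
  have "\<bar>A * e\<^sup>2 - B * e^3\<bar> \<le> (A + B) * e\<^sup>2"
  proof -
    have "B * e^3 \<le> B * e\<^sup>2" using e3 assms by (simp add: mult_left_mono)
    moreover have "0 \<le> B * e^3" "0 \<le> A * e\<^sup>2" using assms by simp_all
    ultimately show ?thesis by (simp add: algebra_simps abs_le_iff)
  qed
  then have "(A * e\<^sup>2 - B * e^3)\<^sup>2 \<le> ((A + B) * e\<^sup>2)\<^sup>2"
    by (metis abs_ge_zero order_trans power2_abs power_mono)
  also have "\<dots> = (A + B)\<^sup>2 * e^4" by (simp add: power_mult_distrib flip: power_mult)
  also have "\<dots> \<le> (A + B)\<^sup>2 * e^3" using e4 by (simp add: mult_left_mono)
  finally have "(A * e\<^sup>2 - B * e^3)\<^sup>2 \<le> (A + B)\<^sup>2 * e^3" .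
  then show ?thesis by (simp add: algebra_simps)
qed

lemma var_real:
  fixes I :: "'i set" and \<alpha> A B :: "'i \<Rightarrow> real" and K h0 :: real
  assumes fin: "finite I" and pos: "\<And>i. i \<in> I \<Longrightarrow> \<alpha> i > 0" and A: "\<And>i. i \<in> I \<Longrightarrow> A i \<ge> 0"
    and B: "\<And>i. i \<in> I \<Longrightarrow> B i \<ge> 0" and h0: "h0 > 0"
    and H: "\<And>h. 0 < h \<Longrightarrow> h \<le> h0 \<Longrightarrow>
      (\<Sum>i\<in>I. (1 / \<alpha> i) * ((A i * h\<^sup>2 - B i * h^3) - 2 * (A i * h\<^sup>2 - B i * h^3)\<^sup>2)) \<le> K * h\<^sup>2 / 2"
  shows "(\<Sum>i\<in>I. (1 / \<alpha> i) * A i) \<le> K / 2"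
proof (rule eps_le[of "min h0 1" "\<Sum>i\<in>I. (1 / \<alpha> i) * (B i + 2 * (A i + B i)\<^sup>2)"])
  show "0 < min h0 1" using h0 by simp
  show "0 \<le> (\<Sum>i\<in>I. (1 / \<alpha> i) * (B i + 2 * (A i + B i)\<^sup>2))"
    using pos B by (intro sum_nonneg mult_nonneg_nonneg add_nonneg_nonneg) (auto simp: less_imp_le)
  fix e :: real assume e: "0 < e" "e \<le> min h0 1"
  let ?C = "\<Sum>i\<in>I. (1 / \<alpha> i) * (B i + 2 * (A i + B i)\<^sup>2)"
  have "(\<Sum>i\<in>I. (1 / \<alpha> i) * (A i * e\<^sup>2 - e^3 * (B i + 2 * (A i + B i)\<^sup>2)))
      \<le> (\<Sum>i\<in>I. (1 / \<alpha> i) * ((A i * e\<^sup>2 - B i * e^3) - 2 * (A i * e\<^sup>2 - B i * e^3)\<^sup>2))"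
    using e pos A B by (intro sum_mono mult_left_mono var_term_bound) (auto simp: less_imp_le)
  also have "\<dots> \<le> K * e\<^sup>2 / 2" using H e by simp
  finally have "(\<Sum>i\<in>I. (1 / \<alpha> i) * (A i * e\<^sup>2 - e^3 * (B i + 2 * (A i + B i)\<^sup>2))) \<le> K * e\<^sup>2 / 2" .
  moreover have "(\<Sum>i\<in>I. (1 / \<alpha> i) * (A i * e\<^sup>2 - e^3 * (B i + 2 * (A i + B i)\<^sup>2)))
      = e\<^sup>2 * (\<Sum>i\<in>I. (1 / \<alpha> i) * A i) - e^3 * ?C"
    by (simp add: sum_subtractf sum_distrib_left algebra_simps)
  ultimately have "e\<^sup>2 * (\<Sum>i\<in>I. (1 / \<alpha> i) * A i) \<le> e\<^sup>2 * (K / 2 + ?C * e)"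
    by (simp add: algebra_simps power2_eq_square power3_eq_cube)
  then show "(\<Sum>i\<in>I. (1 / \<alpha> i) * A i) \<le> K / 2 + ?C * e"
    using e by simp
qed

lemma cs_identity:
  fixes \<alpha> y :: "'i \<Rightarrow> real"
  assumes pos: "\<And>i. i \<in> I \<Longrightarrow> \<alpha> i > 0"
  shows "(\<Sum>i\<in>I. 1 / \<alpha> i) * (\<Sum>i\<in>I. \<alpha> i * (y i)\<^sup>2) - (\<Sum>i\<in>I. y i)\<^sup>2
       = (1/2) * (\<Sum>i\<in>I. \<Sum>j\<in>I. (\<alpha> i * y i - \<alpha> j * y j)\<^sup>2 / (\<alpha> i * \<alpha> j))"
proof -
  have pt: "(\<alpha> i * y i - \<alpha> j * y j)\<^sup>2 / (\<alpha> i * \<alpha> j)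
      = (\<alpha> i * (y i)\<^sup>2) * (1 / \<alpha> j) - 2 * (y i * y j) + (\<alpha> j * (y j)\<^sup>2) * (1 / \<alpha> i)"
    if "i \<in> I" "j \<in> I" for i j
    using pos[OF that(1)] pos[OF that(2)] by (simp add: field_simps power2_eq_square)
  have e1: "(\<Sum>i\<in>I. \<Sum>j\<in>I. (\<alpha> i * y i - \<alpha> j * y j)\<^sup>2 / (\<alpha> i * \<alpha> j))
      = (\<Sum>i\<in>I. \<Sum>j\<in>I. (\<alpha> i * (y i)\<^sup>2) * (1 / \<alpha> j) - 2 * (y i * y j) + (\<alpha> j * (y j)\<^sup>2) * (1 / \<alpha> i))"
    by (intro sum.cong refl) (simp add: pt)
  also have "\<dots> = (\<Sum>i\<in>I. \<Sum>j\<in>I. (\<alpha> i * (y i)\<^sup>2) * (1 / \<alpha> j))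
      - 2 * (\<Sum>i\<in>I. \<Sum>j\<in>I. y i * y j) + (\<Sum>i\<in>I. \<Sum>j\<in>I. (\<alpha> j * (y j)\<^sup>2) * (1 / \<alpha> i))"
    by (simp only: sum.distrib sum_subtractf flip: sum_distrib_left)
  finally have e2: "(\<Sum>i\<in>I. \<Sum>j\<in>I. (\<alpha> i * y i - \<alpha> j * y j)\<^sup>2 / (\<alpha> i * \<alpha> j)) = (\<Sum>i\<in>I. \<Sum>j\<in>I. (\<alpha> i * (y i)\<^sup>2) * (1 / \<alpha> j))
      - 2 * (\<Sum>i\<in>I. \<Sum>j\<in>I. y i * y j) + (\<Sum>i\<in>I. \<Sum>j\<in>I. (\<alpha> j * (y j)\<^sup>2) * (1 / \<alpha> i))" .
  have e3: "(\<Sum>i\<in>I. \<Sum>j\<in>I. (\<alpha> j * (y j)\<^sup>2) * (1 / \<alpha> i)) = (\<Sum>i\<in>I. \<Sum>j\<in>I. (\<alpha> i * (y i)\<^sup>2) * (1 / \<alpha> j))"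
    by (rule sum.swap)
  have e4: "(\<Sum>i\<in>I. \<Sum>j\<in>I. (\<alpha> i * (y i)\<^sup>2) * (1 / \<alpha> j)) = (\<Sum>i\<in>I. \<alpha> i * (y i)\<^sup>2) * (\<Sum>i\<in>I. 1 / \<alpha> i)"
    by (rule sum_product[symmetric])
  have e5: "(\<Sum>i\<in>I. \<Sum>j\<in>I. y i * y j) = (\<Sum>i\<in>I. y i)\<^sup>2"
    by (simp add: power2_eq_square sum_product)
  show ?thesis unfolding e2 e3 e4 e5 by (simp add: algebra_simps)
qed

lemma cs_ineq:
  fixes \<alpha> y :: "'i \<Rightarrow> real"
  assumes pos: "\<And>i. i \<in> I \<Longrightarrow> \<alpha> i > 0"
  shows "(\<Sum>i\<in>I. y i)\<^sup>2 \<le> (\<Sum>i\<in>I. 1 / \<alpha> i) * (\<Sum>i\<in>I. \<alpha> i * (y i)\<^sup>2)"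
proof -
  have "0 \<le> (1/2) * (\<Sum>i\<in>I. \<Sum>j\<in>I. (\<alpha> i * y i - \<alpha> j * y j)\<^sup>2 / (\<alpha> i * \<alpha> j))"
    using pos by (intro mult_nonneg_nonneg sum_nonneg divide_nonneg_nonneg) (auto simp: less_imp_le)
  then show ?thesis using cs_identity[where I=I and y=y and \<alpha>=\<alpha>, OF pos] by simp
qed

lemma cs_eq:
  fixes \<alpha> y :: "'i \<Rightarrow> real"
  assumes fin: "finite I" and pos: "\<And>i. i \<in> I \<Longrightarrow> \<alpha> i > 0"
  shows "(\<Sum>i\<in>I. y i)\<^sup>2 = (\<Sum>i\<in>I. 1 / \<alpha> i) * (\<Sum>i\<in>I. \<alpha> i * (y i)\<^sup>2)
     \<longleftrightarrow> (\<forall>i\<in>I. \<forall>j\<in>I. \<alpha> i * y i = \<alpha> j * y j)"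
proof -
  have nn: "\<And>i j. i \<in> I \<Longrightarrow> j \<in> I \<Longrightarrow> 0 \<le> (\<alpha> i * y i - \<alpha> j * y j)\<^sup>2 / (\<alpha> i * \<alpha> j)"
    using pos by (auto simp: less_imp_le)
  have "(\<Sum>i\<in>I. y i)\<^sup>2 = (\<Sum>i\<in>I. 1 / \<alpha> i) * (\<Sum>i\<in>I. \<alpha> i * (y i)\<^sup>2)
     \<longleftrightarrow> (\<Sum>i\<in>I. \<Sum>j\<in>I. (\<alpha> i * y i - \<alpha> j * y j)\<^sup>2 / (\<alpha> i * \<alpha> j)) = 0"
    using cs_identity[where I=I and y=y and \<alpha>=\<alpha>, OF pos] by linarith
  also have "\<dots> \<longleftrightarrow> (\<forall>i\<in>I. (\<Sum>j\<in>I. (\<alpha> i * y i - \<alpha> j * y j)\<^sup>2 / (\<alpha> i * \<alpha> j)) = 0)"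
    using fin nn by (intro sum_nonneg_eq_0_iff) (auto intro: sum_nonneg)
  also have "\<dots> \<longleftrightarrow> (\<forall>i\<in>I. \<forall>j\<in>I. (\<alpha> i * y i - \<alpha> j * y j)\<^sup>2 / (\<alpha> i * \<alpha> j) = 0)"
    using fin nn by (simp add: sum_nonneg_eq_0_iff)
  also have "\<dots> \<longleftrightarrow> (\<forall>i\<in>I. \<forall>j\<in>I. \<alpha> i * y i = \<alpha> j * y j)"
  proof -
    have "\<And>i j. i \<in> I \<Longrightarrow> j \<in> I \<Longrightarrow> ((\<alpha> i * y i - \<alpha> j * y j)\<^sup>2 / (\<alpha> i * \<alpha> j) = 0) = (\<alpha> i * y i = \<alpha> j * y j)"
    proof -
      fix i j assume "i \<in> I" "j \<in> I"
      then have "\<alpha> i \<noteq> 0" "\<alpha> j \<noteq> 0" using pos by force+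
      then show "((\<alpha> i * y i - \<alpha> j * y j)\<^sup>2 / (\<alpha> i * \<alpha> j) = 0) = (\<alpha> i * y i = \<alpha> j * y j)"
        by simp
    qed
    then show ?thesis by simp
  qed
  finally show ?thesis .
qed

lemma var_alt:
  assumes "prob_space M" and f: "integrable M f" and f2: "integrable M (\<lambda>x. (f x)\<^sup>2)"
  shows "Var M f = (\<integral>x. (f x - (\<integral>y. f y \<partial>M))\<^sup>2 \<partial>M)"
proof -
  interpret prob_space M by fact
  let ?m = "\<integral>y. f y \<partial>M"
  have "(\<integral>x. (f x - ?m)\<^sup>2 \<partial>M) = (\<integral>x. (f x)\<^sup>2 - 2 * ?m * f x + ?m\<^sup>2 \<partial>M)"
    by (simp add: power2_diff algebra_simps)
  also have "\<dots> = (\<integral>x. (f x)\<^sup>2 \<partial>M) - 2 * ?m * ?m + ?m\<^sup>2"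
    using f f2 by (simp add: prob_space)
  finally show ?thesis by (simp add: Var_def power2_eq_square)
qed

lemma gamma_part:
  fixes \<gamma> :: "'b::topological_space measure" and \<pi> :: "'k::finite \<Rightarrow> 'b \<Rightarrow> 'a::topological_space"
    and \<mu> :: "'k \<Rightarrow> 'a measure" and \<phi> :: "'k \<Rightarrow> 'a \<Rightarrow> real" and c :: "'b \<Rightarrow> real" and \<alpha> :: "'k \<Rightarrow> real"
  assumes prob: "prob_space \<gamma>" and sets: "sets \<gamma> = sets borel"
    and \<pi>_meas: "\<And>i. \<pi> i \<in> borel_measurable borel"
    and marg: "\<And>i. distr \<gamma> borel (\<pi> i) = \<mu> i"
    and \<phi>_meas: "\<And>i. \<phi> i \<in> borel_measurable borel"
    and \<phi>_int: "\<And>i. integrable (\<mu> i) (\<phi> i)" and \<phi>2_int: "\<And>i. integrable (\<mu> i) (\<lambda>x. (\<phi> i x)\<^sup>2)"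
    and c_meas: "c \<in> borel_measurable borel"
    and \<alpha>_pos: "\<And>i. \<alpha> i > 0"
    and AEc: "AE x in \<gamma>. c x = (\<Sum>i\<in>UNIV. \<phi> i (\<pi> i x))"
  shows "integrable \<gamma> c \<and> integrable \<gamma> (\<lambda>x. (c x)\<^sup>2)
     \<and> (\<integral>x. c x \<partial>\<gamma>) = (\<Sum>i\<in>UNIV. \<integral>x. \<phi> i x \<partial>\<mu> i)
     \<and> Var \<gamma> c \<le> (\<Sum>i\<in>UNIV. 1 / \<alpha> i) * (\<Sum>i\<in>UNIV. \<alpha> i * Var (\<mu> i) (\<phi> i))
     \<and> (Var \<gamma> c = (\<Sum>i\<in>UNIV. 1 / \<alpha> i) * (\<Sum>i\<in>UNIV. \<alpha> i * Var (\<mu> i) (\<phi> i))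
        \<longleftrightarrow> (AE x in \<gamma>. \<forall>i j. \<alpha> i * (\<phi> i (\<pi> i x) - (\<integral>y. \<phi> i y \<partial>\<mu> i))
                           = \<alpha> j * (\<phi> j (\<pi> j x) - (\<integral>y. \<phi> j y \<partial>\<mu> j))))"
proof -
  interpret prob_space \<gamma> by fact
  have \<pi>m[measurable]: "\<pi> i \<in> \<gamma> \<rightarrow>\<^sub>M borel" for i
    using \<pi>_meas[of i] by (simp add: measurable_cong_sets[OF sets refl])
  have cm[measurable]: "c \<in> borel_measurable \<gamma>"
    using c_meas by (simp add: measurable_cong_sets[OF sets refl])
  note \<phi>_meas[measurable]
  define m where "m i = (\<integral>y. \<phi> i y \<partial>\<mu> i)" for i
  define y where "y i x = \<phi> i (\<pi> i x) - m i" for i x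
  have ym[measurable]: "y i \<in> borel_measurable \<gamma>" for i unfolding y_def by measurable
  have int1: "integrable \<gamma> (\<lambda>x. \<phi> i (\<pi> i x))" for i
    using \<phi>_int[of i] by (simp add: integrable_distr_eq marg[symmetric])
  have int2: "integrable \<gamma> (\<lambda>x. (\<phi> i (\<pi> i x))\<^sup>2)" for i
    using \<phi>2_int[of i] by (simp add: integrable_distr_eq marg[symmetric])
  have I1: "(\<integral>x. \<phi> i (\<pi> i x) \<partial>\<gamma>) = m i" for i
    unfolding m_def marg[symmetric] by (simp add: integral_distr)
  have I2: "(\<integral>x. (\<phi> i (\<pi> i x))\<^sup>2 \<partial>\<gamma>) = (\<integral>x. (\<phi> i x)\<^sup>2 \<partial>\<mu> i)" for i
    unfolding marg[symmetric] by (simp add: integral_distr)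
  have yint: "integrable \<gamma> (y i)" for i unfolding y_def using int1[of i] by simp
  have y2int: "integrable \<gamma> (\<lambda>x. (y i x)\<^sup>2)" for i
    unfolding y_def power2_diff using int1[of i] int2[of i] by simp
  have Vy: "Var (\<mu> i) (\<phi> i) = (\<integral>x. (y i x)\<^sup>2 \<partial>\<gamma>)" for i
  proof -
    have "Var (\<mu> i) (\<phi> i) = Var \<gamma> (\<lambda>x. \<phi> i (\<pi> i x))"
      unfolding Var_def I2 using I1[of i] by (simp add: m_def)
    also have "\<dots> = (\<integral>x. (y i x)\<^sup>2 \<partial>\<gamma>)"
      by (subst var_alt[OF prob int1 int2]) (simp add: y_def I1)
    finally show ?thesis .
  qed
  have sumint: "integrable \<gamma> (\<lambda>x. \<Sum>i\<in>UNIV. \<phi> i (\<pi> i x))" using int1 by simp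
  have cint: "integrable \<gamma> c"
  proof -
    have "integrable \<gamma> c = integrable \<gamma> (\<lambda>x. \<Sum>i\<in>UNIV. \<phi> i (\<pi> i x))"
      by (rule integrable_cong_AE) (use AEc in auto)
    then show ?thesis using sumint by simp
  qed
  let ?S = "\<Sum>i\<in>UNIV. 1 / \<alpha> i"
  have Bint: "integrable \<gamma> (\<lambda>x. ?S * (\<Sum>i\<in>UNIV. \<alpha> i * (\<phi> i (\<pi> i x))\<^sup>2))"
    using int2 by simp
  have c2int: "integrable \<gamma> (\<lambda>x. (c x)\<^sup>2)"
  proof (rule Bochner_Integration.integrable_bound[OF Bint])
    show "AE x in \<gamma>. norm ((c x)\<^sup>2) \<le> norm (?S * (\<Sum>i\<in>UNIV. \<alpha> i * (\<phi> i (\<pi> i x))\<^sup>2))"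
      using AEc
    proof eventually_elim
      case (elim x)
      have "(c x)\<^sup>2 \<le> ?S * (\<Sum>i\<in>UNIV. \<alpha> i * (\<phi> i (\<pi> i x))\<^sup>2)"
        unfolding elim by (rule cs_ineq) (use \<alpha>_pos in auto)
      then show ?case by simp
    qed
  qed simp
  have Ec: "(\<integral>x. c x \<partial>\<gamma>) = (\<Sum>i\<in>UNIV. m i)"
  proof -
    have "(\<integral>x. c x \<partial>\<gamma>) = (\<integral>x. (\<Sum>i\<in>UNIV. \<phi> i (\<pi> i x)) \<partial>\<gamma>)"
      by (rule integral_cong_AE) (use AEc in auto)
    also have "\<dots> = (\<Sum>i\<in>UNIV. m i)" using int1 by (simp add: I1)
    finally show ?thesis .
  qed
  have Vc: "Var \<gamma> c = (\<integral>x. (\<Sum>i\<in>UNIV. y i x)\<^sup>2 \<partial>\<gamma>)"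
  proof -
    have "Var \<gamma> c = (\<integral>x. (c x - (\<Sum>i\<in>UNIV. m i))\<^sup>2 \<partial>\<gamma>)"
      using var_alt[OF prob cint c2int] Ec by simp
    also have "\<dots> = (\<integral>x. (\<Sum>i\<in>UNIV. y i x)\<^sup>2 \<partial>\<gamma>)"
      by (rule integral_cong_AE) (use AEc in \<open>auto simp: y_def sum_subtractf\<close>)
    finally show ?thesis .
  qed
  define D where "D x = ?S * (\<Sum>i\<in>UNIV. \<alpha> i * (y i x)\<^sup>2) - (\<Sum>i\<in>UNIV. y i x)\<^sup>2" for x
  have sy2int: "integrable \<gamma> (\<lambda>x. (\<Sum>i\<in>UNIV. y i x)\<^sup>2)"
  proof (rule Bochner_Integration.integrable_bound[of _ "\<lambda>x. ?S * (\<Sum>i\<in>UNIV. \<alpha> i * (y i x)\<^sup>2)"])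
    show "integrable \<gamma> (\<lambda>x. ?S * (\<Sum>i\<in>UNIV. \<alpha> i * (y i x)\<^sup>2))" using y2int by simp
    show "AE x in \<gamma>. norm ((\<Sum>i\<in>UNIV. y i x)\<^sup>2) \<le> norm (?S * (\<Sum>i\<in>UNIV. \<alpha> i * (y i x)\<^sup>2))"
    proof (intro AE_I2)
      fix x
      have "(\<Sum>i\<in>UNIV. y i x)\<^sup>2 \<le> ?S * (\<Sum>i\<in>UNIV. \<alpha> i * (y i x)\<^sup>2)"
        by (rule cs_ineq) (use \<alpha>_pos in auto)
      then show "norm ((\<Sum>i\<in>UNIV. y i x)\<^sup>2) \<le> norm (?S * (\<Sum>i\<in>UNIV. \<alpha> i * (y i x)\<^sup>2))"
        by simp
    qed
  qed simp
  have Dint: "integrable \<gamma> D" unfolding D_def using y2int sy2int by simp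
  have ID: "(\<integral>x. D x \<partial>\<gamma>) = ?S * (\<Sum>i\<in>UNIV. \<alpha> i * Var (\<mu> i) (\<phi> i)) - Var \<gamma> c"
    unfolding D_def Vc using y2int sy2int by (simp add: Vy)
  have Dnn: "0 \<le> D x" for x
    unfolding D_def using cs_ineq[of UNIV \<alpha> "\<lambda>i. y i x"] \<alpha>_pos by simp
  have "0 \<le> (\<integral>x. D x \<partial>\<gamma>)" using Dnn by simp
  then have le: "Var \<gamma> c \<le> ?S * (\<Sum>i\<in>UNIV. \<alpha> i * Var (\<mu> i) (\<phi> i))" using ID by simp
  have "Var \<gamma> c = ?S * (\<Sum>i\<in>UNIV. \<alpha> i * Var (\<mu> i) (\<phi> i)) \<longleftrightarrow> (\<integral>x. D x \<partial>\<gamma>) = 0"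
    using ID by linarith
  also have "\<dots> \<longleftrightarrow> (AE x in \<gamma>. D x = 0)"
    using Dint Dnn by (intro integral_nonneg_eq_0_iff_AE) auto
  also have "\<dots> \<longleftrightarrow> (AE x in \<gamma>. \<forall>i j. \<alpha> i * y i x = \<alpha> j * y j x)"
  proof (rule AE_cong)
    fix x
    show "D x = 0 \<longleftrightarrow> (\<forall>i j. \<alpha> i * y i x = \<alpha> j * y j x)"
      unfolding D_def using cs_eq[of UNIV \<alpha> "\<lambda>i. y i x"] \<alpha>_pos by auto
  qed
  finally have eq: "Var \<gamma> c = ?S * (\<Sum>i\<in>UNIV. \<alpha> i * Var (\<mu> i) (\<phi> i)) \<longleftrightarrow>
      (AE x in \<gamma>. \<forall>i j. \<alpha> i * (\<phi> i (\<pi> i x) - (\<integral>y. \<phi> i y \<partial>\<mu> i))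
                           = \<alpha> j * (\<phi> j (\<pi> j x) - (\<integral>y. \<phi> j y \<partial>\<mu> j)))"
    by (simp add: y_def m_def)
  show ?thesis using cint c2int Ec le eq by (simp add: m_def)
qed

lemma enn_powr_ennreal: "x \<ge> 0 \<Longrightarrow> enn_powr (ennreal x) a = ennreal (x powr a)"
  by (simp add: enn_powr_def)

lemma enn_powr_eq_0: "enn_powr z a = 0 \<longleftrightarrow> z = 0"
  by (cases z) (auto simp: enn_powr_def)

lemma enn_powr_eq_top: "enn_powr z a = top \<longleftrightarrow> z = top"
  by (cases z) (auto simp: enn_powr_def)

lemma expneg_eq_0: "expneg a v = 0 \<longleftrightarrow> v = \<infinity>"
  by (simp add: expneg_def)

locale L =
  fixes c :: "real^'n^'k \<Rightarrow> real"
    and p :: real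
    and \<rho> :: "'k \<Rightarrow> real^'n \<Rightarrow> real"
    and r \<alpha> :: "'k \<Rightarrow> real"
    and \<Phi> :: "'k \<Rightarrow> real^'n \<Rightarrow> ereal"
    and even_only :: bool
    and m \<mu> :: "'k \<Rightarrow> (real^'n) measure"
  assumes p_pos: "p > 0"
    and c_hom: "homogeneous_cost p c"
    and c_meas: "c \<in> borel_measurable borel"
    and \<rho>_nonneg: "\<And>i x. \<rho> i x \<ge> 0"
    and \<rho>_meas: "\<And>i. \<rho> i \<in> borel_measurable borel"
    and \<rho>_hom: "\<And>i. homogeneous_density (r i) (\<rho> i)"
    and r_nonneg: "\<And>i. r i \<ge> 0"
    and \<alpha>_pos: "\<And>i. \<alpha> i > 0"
    and m_def: "\<And>i. m i = density lborel (\<lambda>x. ennreal (\<rho> i x))"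
    and \<Phi>_adm: "admissible c \<Phi>"
    and \<Phi>_meas: "\<And>i. \<Phi> i \<in> borel_measurable borel"
    and \<Phi>_even: "even_only \<Longrightarrow> (\<forall>i x. \<Phi> i (- x) = \<Phi> i x)"
    and \<Phi>_max: "\<And>V. admissible c V \<Longrightarrow> (\<forall>i. V i \<in> borel_measurable borel) \<Longrightarrow>
                   (even_only \<longrightarrow> (\<forall>i x. V i (- x) = V i x)) \<Longrightarrow> BS \<alpha> m V \<le> BS \<alpha> m \<Phi>"
    and BS_pos: "0 < BS \<alpha> m \<Phi>"
    and BS_fin: "BS \<alpha> m \<Phi> < \<infinity>"
    and \<mu>_def: "\<And>i. \<mu> i = density (m i) (\<lambda>x. expneg (\<alpha> i) (\<Phi> i x) /
                        (\<integral>\<^sup>+ y. expneg (\<alpha> i) (\<Phi> i y) \<partial>m i))"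
begin

definition F where "F i s = (\<integral>\<^sup>+x. expneg (\<alpha> i * s) (\<Phi> i x) \<partial>m i)"
definition f where "f i s = enn2real (F i s)"
definition K where "K = (\<Sum>i\<in>UNIV. (real CARD('n) + r i) / (p * \<alpha> i))"
definition V where "V t i x = ereal (t powr p) * \<Phi> i ((1/t) *\<^sub>R x)"

lemma F_scale:
  assumes t: "t > 0"
  shows "(\<integral>\<^sup>+x. expneg (\<alpha> i) (V t i x) \<partial>m i) = ennreal (t powr (real CARD('n) + r i)) * F i (t powr p)"
proof -
  have hom: "\<rho> i (t *\<^sub>R x) = t powr r i * \<rho> i x" for x
    using \<rho>_hom[of i] t by (simp add: homogeneous_density_def)
  note S = scale_nn_integral[where r="r i" and \<rho>="\<rho> i" and \<Phi>="\<Phi> i" and a="\<alpha> i" and p=p, OF t \<rho>_meas \<Phi>_meas \<rho>_nonneg hom]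
  have D: "real DIM(real^'n) = real CARD('n)" by simp
  show ?thesis
    unfolding V_def F_def m_def using S unfolding D .
qed

lemma BS_V: "t > 0 \<Longrightarrow> BS \<alpha> m (V t) = (\<Prod>i\<in>UNIV. enn_powr (ennreal (t powr (real CARD('n) + r i)) * F i (t powr p)) (1 / \<alpha> i))"
  unfolding BS_def by (simp add: F_scale)

lemma BS_Phi: "BS \<alpha> m \<Phi> = (\<Prod>i\<in>UNIV. enn_powr (F i 1) (1 / \<alpha> i))"
  unfolding BS_def F_def by simp

lemma V_le: assumes t: "t > 0" shows "BS \<alpha> m (V t) \<le> BS \<alpha> m \<Phi>"
proof (rule \<Phi>_max)
  show "admissible c (V t)" unfolding V_def[abs_def] by (rule adm_scale[OF t c_hom \<Phi>_adm])
  show "\<forall>i. V t i \<in> borel_measurable borel"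
  proof
    fix i
    have sc: "(\<lambda>x::real^'n. (1/t) *\<^sub>R x) \<in> borel_measurable borel" by simp
    have "(\<lambda>x. \<Phi> i ((1/t) *\<^sub>R x)) \<in> borel_measurable borel"
      by (rule measurable_compose[OF sc \<Phi>_meas])
    then show "V t i \<in> borel_measurable borel" unfolding V_def[abs_def] by simp
  qed
  show "even_only \<longrightarrow> (\<forall>i x. V t i (- x) = V t i x)"
    using \<Phi>_even by (auto simp: V_def)
qed

lemma F1_ne0: "F i 1 \<noteq> 0"
proof -
  have "BS \<alpha> m \<Phi> \<noteq> 0" using BS_pos by simp
  then have "\<forall>i. enn_powr (F i 1) (1 / \<alpha> i) \<noteq> 0" unfolding BS_Phi by simp
  then show ?thesis by (simp add: enn_powr_eq_0)
qed

lemma F1_fin: "F i 1 \<noteq> \<infinity>"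
proof
  assume "F i 1 = \<infinity>"
  then have "BS \<alpha> m \<Phi> = top" unfolding BS_Phi
    by (subst ennreal_prod_eq_top) (auto simp: enn_powr_eq_0 enn_powr_eq_top F1_ne0)
  then show False using BS_fin by simp
qed

lemma F_ne0: assumes "s > 0" shows "F i s \<noteq> 0"
proof -
  have "F i s = 0 \<longleftrightarrow> (AE x in m i. \<Phi> i x = \<infinity>)"
    unfolding F_def using \<Phi>_meas
    by (subst nn_integral_0_iff_AE) (auto simp: expneg_eq_0 m_def)
  moreover have "F i 1 = 0 \<longleftrightarrow> (AE x in m i. \<Phi> i x = \<infinity>)"
    unfolding F_def using \<Phi>_meas
    by (subst nn_integral_0_iff_AE) (auto simp: expneg_eq_0 m_def)
  ultimately show ?thesis using F1_ne0 by simp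
qed

lemma F_fin: assumes s: "s > 0" shows "F i s \<noteq> \<infinity>"
proof
  assume inf: "F i s = \<infinity>"
  define t where "t = s powr (1/p)"
  have t: "t > 0" using s by (simp add: t_def)
  have tp: "t powr p = s" using s p_pos by (simp add: t_def powr_powr)
  have "BS \<alpha> m (V t) = top"
    unfolding BS_V[OF t] tp using t s inf
    by (subst ennreal_prod_eq_top) (auto simp: enn_powr_eq_0 enn_powr_eq_top F_ne0 ennreal_mult_eq_top_iff)
  then show False using V_le[OF t] BS_fin by (simp add: top_unique)
qed

lemma F_eq: "s > 0 \<Longrightarrow> F i s = ennreal (f i s)"
  using F_fin by (simp add: f_def ennreal_enn2real_if)

lemma f_pos: "s > 0 \<Longrightarrow> f i s > 0"
proof -
  assume s: "s > 0"
  have "F i s \<noteq> 0" "F i s \<noteq> top" using F_ne0[OF s] F_fin[OF s] by simp_all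
  then show "f i s > 0" unfolding f_def by (simp add: enn2real_positive_iff less_top[symmetric] zero_less_iff_neq_zero)
qed

lemma ineq_real:
  assumes s: "s > 0"
  shows "(\<Sum>i\<in>UNIV. (1 / \<alpha> i) * (ln (f i s) - ln (f i 1))) \<le> - K * ln s"
proof -
  define t where "t = s powr (1/p)"
  have t: "t > 0" using s by (simp add: t_def)
  have tp: "t powr p = s" using s p_pos by (simp add: t_def powr_powr)
  define e where "e i = real CARD('n) + r i" for i
  have fs: "f i s > 0" "f i 1 > 0" for i using f_pos[OF s] f_pos[of 1] by auto
  have fs0: "f i s \<noteq> 0" for i using fs(1)[of i] by simp
  have fs1: "f i 1 \<noteq> 0" for i using fs(2)[of i] by simp
  define P where "P = (\<Prod>i\<in>UNIV. (t powr e i * f i s) powr (1 / \<alpha> i))"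
  define Q where "Q = (\<Prod>i\<in>UNIV. (f i 1) powr (1 / \<alpha> i))"
  have "BS \<alpha> m (V t) = ennreal P"
  proof -
    have "BS \<alpha> m (V t) = (\<Prod>i\<in>UNIV. enn_powr (ennreal (t powr e i * f i s)) (1 / \<alpha> i))"
      unfolding BS_V[OF t] tp e_def using F_eq[OF s] fs
      by (simp add: ennreal_mult[symmetric] less_imp_le)
    also have "\<dots> = (\<Prod>i\<in>UNIV. ennreal ((t powr e i * f i s) powr (1 / \<alpha> i)))"
      using fs by (simp add: enn_powr_ennreal less_imp_le)
    also have "\<dots> = ennreal P" unfolding P_def by (rule prod_ennreal) simp
    finally show ?thesis .
  qed
  moreover have "BS \<alpha> m \<Phi> = ennreal Q"
  proof -
    have "BS \<alpha> m \<Phi> = (\<Prod>i\<in>UNIV. ennreal ((f i 1) powr (1 / \<alpha> i)))"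
      unfolding BS_Phi using F_eq[of 1] fs by (simp add: enn_powr_ennreal less_imp_le)
    also have "\<dots> = ennreal Q" unfolding Q_def by (rule prod_ennreal) simp
    finally show ?thesis .
  qed
  ultimately have "ennreal P \<le> ennreal Q" using V_le[OF t] by simp
  moreover have Qnn: "Q \<ge> 0" unfolding Q_def by (simp add: prod_nonneg)
  ultimately have PQ: "P \<le> Q" by simp
  have Ppos: "P > 0" unfolding P_def
  proof (intro prod_pos)
    fix i :: 'k
    show "(t powr e i * f i s) powr (1 / \<alpha> i) > 0" using t fs0[of i] by simp
  qed
  have "ln P \<le> ln Q" using PQ Ppos by simp
  moreover have "ln P = (\<Sum>i\<in>UNIV. (1 / \<alpha> i) * (e i * ln t + ln (f i s)))"
  proof -
    have "ln P = (\<Sum>i\<in>UNIV. ln ((t powr e i * f i s) powr (1 / \<alpha> i)))"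
      unfolding P_def
    proof (rule ln_prod)
      fix i :: 'k
      show "(t powr e i * f i s) powr (1 / \<alpha> i) \<noteq> 0" using t fs0[of i] by simp
    qed simp
    also have "\<dots> = (\<Sum>i\<in>UNIV. (1 / \<alpha> i) * (e i * ln t + ln (f i s)))"
      using t by (simp add: ln_mult fs0)
    finally show ?thesis .
  qed
  moreover have "ln Q = (\<Sum>i\<in>UNIV. (1 / \<alpha> i) * ln (f i 1))"
    unfolding Q_def by (subst ln_prod) (auto simp: fs1)
  moreover have "ln t = ln s / p" using s by (simp add: t_def)
  ultimately have "(\<Sum>i\<in>UNIV. (1 / \<alpha> i) * (e i * (ln s / p) + ln (f i s))) \<le> (\<Sum>i\<in>UNIV. (1 / \<alpha> i) * ln (f i 1))"
    by simp
  moreover have "(\<Sum>i\<in>UNIV. (1 / \<alpha> i) * (e i * (ln s / p) + ln (f i s)))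
      = K * ln s + (\<Sum>i\<in>UNIV. (1 / \<alpha> i) * ln (f i s))"
  proof -
    have "(\<Sum>i\<in>UNIV. (1 / \<alpha> i) * (e i * (ln s / p) + ln (f i s)))
        = (\<Sum>i\<in>UNIV. (e i / (p * \<alpha> i)) * ln s + (1 / \<alpha> i) * ln (f i s))"
    proof (intro sum.cong refl)
      fix i
      show "(1 / \<alpha> i) * (e i * (ln s / p) + ln (f i s)) = (e i / (p * \<alpha> i)) * ln s + (1 / \<alpha> i) * ln (f i s)"
        using p_pos \<alpha>_pos[of i] by (simp add: field_simps)
    qed
    also have "\<dots> = (\<Sum>i\<in>UNIV. e i / (p * \<alpha> i)) * ln s + (\<Sum>i\<in>UNIV. (1 / \<alpha> i) * ln (f i s))"
      by (simp add: sum.distrib sum_distrib_right)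
    finally show ?thesis unfolding K_def e_def by simp
  qed
  moreover have "(\<Sum>i\<in>UNIV. (1 / \<alpha> i) * (ln (f i s) - ln (f i 1)))
      = (\<Sum>i\<in>UNIV. (1 / \<alpha> i) * ln (f i s)) - (\<Sum>i\<in>UNIV. (1 / \<alpha> i) * ln (f i 1))"
    by (simp add: sum_subtractf algebra_simps)
  ultimately show ?thesis by linarith
qed

end

lemma expneg_mult_exp:
  "expneg a v * ennreal (exp (- a * h * real_of_ereal v)) = expneg (a * (1 + h)) v"
  by (cases v) (auto simp: expneg_def ennreal_mult[symmetric] exp_add[symmetric] algebra_simps)

context L begin

definition \<phi> where "\<phi> i x = real_of_ereal (\<Phi> i x)"

lemma \<phi>_meas[measurable]: "\<phi> i \<in> borel_measurable borel"
  unfolding \<phi>_def[abs_def] using \<Phi>_meas[of i] by measurable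

lemma sets_m[measurable_cong]: "sets (m i) = sets borel"
  by (simp add: m_def)

lemma sets_\<mu>[measurable_cong]: "sets (\<mu> i) = sets borel"
  by (simp add: \<mu>_def m_def)

lemma space_\<mu>: "space (\<mu> i) = UNIV"
  using sets_eq_imp_space_eq[OF sets_\<mu>] by simp

lemma nn_mu:
  assumes h: "h > -1"
  shows "(\<integral>\<^sup>+x. ennreal (exp (- \<alpha> i * h * \<phi> i x)) \<partial>\<mu> i) = F i (1 + h) / F i 1"
proof -
  have [measurable]: "\<Phi> i \<in> borel_measurable (m i)"
    using \<Phi>_meas[of i] by (simp add: measurable_cong_sets[OF sets_m refl])
  have "(\<integral>\<^sup>+x. ennreal (exp (- \<alpha> i * h * \<phi> i x)) \<partial>\<mu> i)
      = (\<integral>\<^sup>+x. expneg (\<alpha> i) (\<Phi> i x) / F i 1 * ennreal (exp (- \<alpha> i * h * \<phi> i x)) \<partial>m i)"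
    unfolding \<mu>_def F_def[symmetric, of i 1, simplified]
    by (subst nn_integral_density) (auto simp: \<phi>_def)
  also have "\<dots> = (\<integral>\<^sup>+x. expneg (\<alpha> i * (1 + h)) (\<Phi> i x) / F i 1 \<partial>m i)"
  proof (rule nn_integral_cong)
    fix x
    show "expneg (\<alpha> i) (\<Phi> i x) / F i 1 * ennreal (exp (- \<alpha> i * h * \<phi> i x)) = expneg (\<alpha> i * (1 + h)) (\<Phi> i x) / F i 1"
      unfolding \<phi>_def expneg_mult_exp[symmetric]
      by (simp add: ennreal_times_divide mult.commute)
  qed
  also have "\<dots> = F i (1 + h) / F i 1"
    unfolding F_def by (subst nn_integral_divide) auto
  finally show ?thesis .
qed

lemma prob_mu: "prob_space (\<mu> i)"
proof
  have "(\<integral>\<^sup>+x. ennreal (exp (- \<alpha> i * 0 * \<phi> i x)) \<partial>\<mu> i) = F i (1 + 0) / F i 1"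
    by (rule nn_mu) simp
  then have "(\<integral>\<^sup>+x. 1 \<partial>\<mu> i) = 1" using F1_ne0 F1_fin by (simp add: top.not_eq_extremum)
  then show "emeasure (\<mu> i) (space (\<mu> i)) = 1" by simp
qed

lemma int_mu:
  assumes h: "h > -1"
  shows "integrable (\<mu> i) (\<lambda>x. exp (- \<alpha> i * h * \<phi> i x))"
    and "(\<integral>x. exp (- \<alpha> i * h * \<phi> i x) \<partial>\<mu> i) = f i (1 + h) / f i 1"
proof -
  have h1: "1 + h > 0" using h by simp
  have eq: "(\<integral>\<^sup>+x. ennreal (exp (- \<alpha> i * h * \<phi> i x)) \<partial>\<mu> i) = ennreal (f i (1 + h) / f i 1)"
    unfolding nn_mu[OF h] F_eq[OF h1] F_eq[of 1, simplified]
    using f_pos[OF h1, of i] f_pos[of 1 i] by (simp add: divide_ennreal)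
  show "integrable (\<mu> i) (\<lambda>x. exp (- \<alpha> i * h * \<phi> i x))"
    by (rule integrableI_nn_integral_finite[OF _ _ eq]) auto
  show "(\<integral>x. exp (- \<alpha> i * h * \<phi> i x) \<partial>\<mu> i) = f i (1 + h) / f i 1"
    using f_pos[OF h1, of i] f_pos[of 1 i]
    by (subst integral_eq_nn_integral) (auto simp: eq[simplified])
qed

end

context L begin

lemma mom:
  shows "integrable (\<mu> i) (\<phi> i)" "integrable (\<mu> i) (\<lambda>x. (\<phi> i x)\<^sup>2)"
    "integrable (\<mu> i) (\<lambda>x. \<bar>\<phi> i x - c0\<bar>^3)"
proof -
  have a: "\<alpha> i / 2 > 0" using \<alpha>_pos[of i] by simp
  have e1: "(\<lambda>x. exp (\<alpha> i / 2 * \<phi> i x)) = (\<lambda>x. exp (- \<alpha> i * (-1/2) * \<phi> i x))"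
    by (simp add: fun_eq_iff)
  have e2: "(\<lambda>x. exp (- (\<alpha> i / 2) * \<phi> i x)) = (\<lambda>x. exp (- \<alpha> i * (1/2) * \<phi> i x))"
    by (simp add: fun_eq_iff)
  have i1: "integrable (\<mu> i) (\<lambda>x. exp (\<alpha> i / 2 * \<phi> i x))"
    unfolding e1 by (rule int_mu) simp
  have i2: "integrable (\<mu> i) (\<lambda>x. exp (- (\<alpha> i / 2) * \<phi> i x))"
    unfolding e2 by (rule int_mu) simp
  have [measurable]: "\<phi> i \<in> borel_measurable (\<mu> i)" by simp
  note X = exp_moments[OF _ a i1 i2]
  show "integrable (\<mu> i) (\<phi> i)" "integrable (\<mu> i) (\<lambda>x. (\<phi> i x)\<^sup>2)"
    "integrable (\<mu> i) (\<lambda>x. \<bar>\<phi> i x - c0\<bar>^3)" using X by auto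
qed

definition M where "M i = (\<integral>x. \<phi> i x \<partial>\<mu> i)"
definition Vr where "Vr i = Var (\<mu> i) (\<phi> i)"
definition T where "T i = (\<integral>x. \<bar>\<phi> i x - M i\<bar>^3 \<partial>\<mu> i)"
definition E where "E i h = (\<integral>x. exp (- \<alpha> i * h * \<phi> i x) \<partial>\<mu> i)"

lemma Vr_eq: "Vr i = (\<integral>x. (\<phi> i x - M i)\<^sup>2 \<partial>\<mu> i)"
  unfolding Vr_def M_def by (rule var_alt[OF prob_mu mom(1,2)])

lemma Vr_nn: "Vr i \<ge> 0"
  unfolding Vr_eq by simp

lemma T_nn: "T i \<ge> 0"
  unfolding T_def by simp

lemma E_pos: "h > -1 \<Longrightarrow> E i h > 0"
  unfolding E_def using int_mu(2)[of h i] f_pos[of "1 + h" i] f_pos[of 1 i] by simp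

lemma ineq_E:
  assumes h: "h > -1"
  shows "(\<Sum>i\<in>UNIV. (1 / \<alpha> i) * ln (E i h)) \<le> - K * ln (1 + h)"
proof -
  have h1: "1 + h > 0" using h by simp
  have "E i h = f i (1 + h) / f i 1" for i unfolding E_def using int_mu(2)[OF h] by simp
  then have "ln (E i h) = ln (f i (1 + h)) - ln (f i 1)" for i
    using f_pos[OF h1, of i] f_pos[of 1 i] by (simp add: ln_div)
  then show ?thesis using ineq_real[OF h1] by simp
qed

lemma int_psi: "integrable (\<mu> i) (\<lambda>x. \<phi> i x - M i)"
proof -
  interpret prob_space "\<mu> i" by (rule prob_mu)
  show ?thesis using mom(1)[of i] by simp
qed

lemma int_psi2: "integrable (\<mu> i) (\<lambda>x. (\<phi> i x - M i)\<^sup>2)"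
proof -
  interpret prob_space "\<mu> i" by (rule prob_mu)
  show ?thesis unfolding power2_diff using mom(1,2)[of i] by simp
qed

lemma int_psi_zero: "(\<integral>x. \<phi> i x - M i \<partial>\<mu> i) = 0"
proof -
  interpret prob_space "\<mu> i" by (rule prob_mu)
  show ?thesis using mom(1)[of i] by (simp add: M_def prob_space)
qed

lemma E_lower1:
  assumes h: "h > -1"
  shows "exp (- \<alpha> i * h * M i) \<le> E i h"
proof -
  interpret prob_space "\<mu> i" by (rule prob_mu)
  let ?C = "exp (- \<alpha> i * h * M i)"
  have "(\<integral>x. ?C * (1 + (- \<alpha> i * h) * (\<phi> i x - M i)) \<partial>\<mu> i) \<le> E i h"
    unfolding E_def
  proof (rule integral_mono)
    show "integrable (\<mu> i) (\<lambda>x. ?C * (1 + (- \<alpha> i * h) * (\<phi> i x - M i)))"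
      using int_psi[of i] by simp
    show "integrable (\<mu> i) (\<lambda>x. exp (- \<alpha> i * h * \<phi> i x))" by (rule int_mu(1)[OF h])
    fix x
    have "1 + (- \<alpha> i * h) * (\<phi> i x - M i) \<le> exp ((- \<alpha> i * h) * (\<phi> i x - M i))"
      by (rule exp_ge_add_one_self)
    then have "?C * (1 + (- \<alpha> i * h) * (\<phi> i x - M i)) \<le> ?C * exp ((- \<alpha> i * h) * (\<phi> i x - M i))"
      by simp
    also have "\<dots> = exp (- \<alpha> i * h * \<phi> i x)"
      by (simp add: exp_add[symmetric] algebra_simps)
    finally show "?C * (1 + (- \<alpha> i * h) * (\<phi> i x - M i)) \<le> exp (- \<alpha> i * h * \<phi> i x)" .
  qed
  moreover have "(\<integral>x. ?C * (1 + (- \<alpha> i * h) * (\<phi> i x - M i)) \<partial>\<mu> i) = ?C"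
  proof -
    have "(\<integral>x. ?C * (1 + (- \<alpha> i * h) * (\<phi> i x - M i)) \<partial>\<mu> i)
        = ?C * (\<integral>x. 1 + (- \<alpha> i * h) * (\<phi> i x - M i) \<partial>\<mu> i)" by simp
    also have "(\<integral>x. 1 + (- \<alpha> i * h) * (\<phi> i x - M i) \<partial>\<mu> i)
        = (\<integral>x. 1 \<partial>\<mu> i) + (\<integral>x. (- \<alpha> i * h) * (\<phi> i x - M i) \<partial>\<mu> i)"
      using int_psi[of i] by (intro Bochner_Integration.integral_add) auto
    also have "\<dots> = 1" using int_psi_zero[of i] by (simp add: prob_space)
    finally show ?thesis by simp
  qed
  ultimately show ?thesis by simp
qed

lemma E_lower2:
  assumes h: "h \<ge> 0"
  shows "exp (- \<alpha> i * h * M i) * (1 + (\<alpha> i * h)\<^sup>2 / 2 * Vr i - (\<alpha> i * h)^3 / 6 * T i) \<le> E i h"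
proof -
  interpret prob_space "\<mu> i" by (rule prob_mu)
  let ?C = "exp (- \<alpha> i * h * M i)"
  let ?a = "\<alpha> i * h"
  define L where "L x = ?C * (1 + (- ?a) * (\<phi> i x - M i) + (?a\<^sup>2 / 2) * (\<phi> i x - M i)\<^sup>2
        - (?a^3 / 6) * \<bar>\<phi> i x - M i\<bar>^3)" for x
  have a0: "?a \<ge> 0" using h \<alpha>_pos[of i] by simp
  have i3: "integrable (\<mu> i) (\<lambda>x. \<bar>\<phi> i x - M i\<bar>^3)" by (rule mom(3))
  have iL: "integrable (\<mu> i) L"
    unfolding L_def using int_psi[of i] int_psi2[of i] i3 by simp
  have "(\<integral>x. L x \<partial>\<mu> i) \<le> E i h"
    unfolding E_def
  proof (rule integral_mono[OF iL int_mu(1)])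
    show "h > -1" using h by simp
    fix x
    let ?y = "(- ?a) * (\<phi> i x - M i)"
    have "?y^3 \<ge> - (?a^3 * \<bar>\<phi> i x - M i\<bar>^3)"
    proof -
      have "\<bar>?y\<bar> = ?a * \<bar>\<phi> i x - M i\<bar>" using h \<alpha>_pos[of i] by (simp add: abs_mult)
      then have "\<bar>?y^3\<bar> = (?a * \<bar>\<phi> i x - M i\<bar>)^3" by (metis power_abs)
      then have "\<bar>?y^3\<bar> = ?a^3 * \<bar>\<phi> i x - M i\<bar>^3" by (simp only: power_mult_distrib)
      then show ?thesis using abs_ge_minus_self[of "?y^3"] by linarith
    qed
    then have "1 + ?y + ?y\<^sup>2/2 - (?a^3 / 6) * \<bar>\<phi> i x - M i\<bar>^3 \<le> exp ?y"
      using exp_taylor3[of ?y] by linarith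
    moreover have "?y\<^sup>2 = ?a\<^sup>2 * (\<phi> i x - M i)\<^sup>2" by (simp add: power_mult_distrib)
    ultimately have "1 + (- ?a) * (\<phi> i x - M i) + (?a\<^sup>2 / 2) * (\<phi> i x - M i)\<^sup>2
        - (?a^3 / 6) * \<bar>\<phi> i x - M i\<bar>^3 \<le> exp ?y" by simp
    then have "L x \<le> ?C * exp ?y" unfolding L_def by (simp add: mult_left_mono)
    also have "\<dots> = exp (- \<alpha> i * h * \<phi> i x)"
      by (simp add: exp_add[symmetric] algebra_simps)
    finally show "L x \<le> exp (- \<alpha> i * h * \<phi> i x)" .
  qed
  moreover have "(\<integral>x. L x \<partial>\<mu> i) = ?C * (1 + (\<alpha> i * h)\<^sup>2 / 2 * Vr i - (\<alpha> i * h)^3 / 6 * T i)"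
  proof -
    have "(\<integral>x. L x \<partial>\<mu> i) = ?C * ((\<integral>x. 1 \<partial>\<mu> i) + (- ?a) * (\<integral>x. \<phi> i x - M i \<partial>\<mu> i)
        + (?a\<^sup>2 / 2) * (\<integral>x. (\<phi> i x - M i)\<^sup>2 \<partial>\<mu> i) - (?a^3 / 6) * (\<integral>x. \<bar>\<phi> i x - M i\<bar>^3 \<partial>\<mu> i))"
      unfolding L_def using int_psi[of i] int_psi2[of i] i3 by simp
    then show ?thesis using int_psi_zero[of i] by (simp add: Vr_eq[symmetric] T_def prob_space)
  qed
  ultimately show ?thesis by simp
qed

lemma K_nn: "K \<ge> 0"
  unfolding K_def using p_pos \<alpha>_pos r_nonneg
  by (intro sum_nonneg divide_nonneg_nonneg) (auto intro: add_nonneg_nonneg less_imp_le)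

lemma sum_M: "(\<Sum>i\<in>UNIV. M i) = K"
proof (rule first_id[OF K_nn])
  fix h :: real assume h: "-1/2 \<le> h" "h \<le> 1/2" "h \<noteq> 0"
  have hm: "h > -1" using h by simp
  have "ln (E i h) \<ge> - \<alpha> i * h * M i" for i
    using E_lower1[OF hm, of i] E_pos[OF hm, of i] by (metis ln_exp ln_le_cancel_iff exp_gt_zero)
  then have "(\<Sum>i\<in>UNIV. (1 / \<alpha> i) * (- \<alpha> i * h * M i)) \<le> (\<Sum>i\<in>UNIV. (1 / \<alpha> i) * ln (E i h))"
    using \<alpha>_pos by (intro sum_mono mult_left_mono) (auto simp: less_imp_le)
  moreover have "(\<Sum>i\<in>UNIV. (1 / \<alpha> i) * (- \<alpha> i * h * M i)) = - h * (\<Sum>i\<in>UNIV. M i)"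
  proof -
    have "(\<Sum>i\<in>UNIV. (1 / \<alpha> i) * (- \<alpha> i * h * M i)) = (\<Sum>i\<in>UNIV. - h * M i)"
      using \<alpha>_pos by (intro sum.cong refl) (simp add: less_imp_neq[symmetric])
    then show ?thesis by (simp add: sum_distrib_left)
  qed
  ultimately show "- h * (\<Sum>i\<in>UNIV. M i) \<le> - K * ln (1 + h)"
    using ineq_E[OF hm] by linarith
qed

lemma var_bound: "(\<Sum>i\<in>UNIV. \<alpha> i * Vr i) \<le> K"
proof -
  define A where "A i = (\<alpha> i)\<^sup>2 * Vr i / 2" for i
  define B where "B i = (\<alpha> i)^3 * T i / 6" for i
  define SB where "SB = (\<Sum>i\<in>UNIV. B i)"
  define h0 where "h0 = 1 / (1 + 2 * SB)"
  have A0: "A i \<ge> 0" for i unfolding A_def using Vr_nn[of i] by simp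
  have B0: "B i \<ge> 0" for i unfolding B_def using T_nn[of i] \<alpha>_pos[of i] by simp
  have SB0: "SB \<ge> 0" unfolding SB_def using B0 by (simp add: sum_nonneg)
  have BSB: "B i \<le> SB" for i unfolding SB_def using B0 by (intro member_le_sum) auto
  have h0: "h0 > 0" "h0 \<le> 1" using SB0 by (auto simp: h0_def)
  have "(\<Sum>i\<in>UNIV. (1 / \<alpha> i) * A i) \<le> K / 2"
  proof (rule var_real[OF _ _ A0 B0 h0(1)])
    show "\<alpha> i > 0" for i by (rule \<alpha>_pos)
    fix h :: real assume h: "0 < h" "h \<le> h0"
    have h1: "h \<le> 1" using h h0 by simp
    have hm: "h > -1" using h by simp
    define u where "u i = A i * h\<^sup>2 - B i * h^3" for i
    have u_low: "u i \<ge> -1/2" for i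
    proof -
      have "h^3 \<le> h" using h h1 by (simp add: power_le_one power3_eq_cube mult_le_one)
      then have "B i * h^3 \<le> SB * h" using B0[of i] BSB[of i] h
        by (meson mult_mono order_trans less_imp_le zero_le_power)
      also have "SB * h \<le> SB * h0" using SB0 h by (simp add: mult_left_mono)
      also have "SB * h0 \<le> 1/2" using SB0 by (simp add: h0_def field_simps)
      finally have "B i * h^3 \<le> 1/2" .
      moreover have "A i * h\<^sup>2 \<ge> 0" using A0[of i] by simp
      ultimately show ?thesis unfolding u_def by linarith
    qed
    have lnE: "ln (E i h) \<ge> - \<alpha> i * h * M i + (u i - 2 * (u i)\<^sup>2)" for i
    proof -
      have ueq: "1 + (\<alpha> i * h)\<^sup>2 / 2 * Vr i - (\<alpha> i * h)^3 / 6 * T i = 1 + u i"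
        unfolding u_def A_def B_def by (simp add: power_mult_distrib algebra_simps)
      have pos: "1 + u i > 0" using u_low[of i] by simp
      have "exp (- \<alpha> i * h * M i) * (1 + (\<alpha> i * h)\<^sup>2 / 2 * Vr i - (\<alpha> i * h)^3 / 6 * T i) \<le> E i h"
        by (rule E_lower2) (use h in simp)
      then have "exp (- \<alpha> i * h * M i) * (1 + u i) \<le> E i h" unfolding ueq .
      then have "ln (exp (- \<alpha> i * h * M i) * (1 + u i)) \<le> ln (E i h)"
        using pos E_pos[OF hm, of i] by (subst ln_le_cancel_iff) auto
      then have "- \<alpha> i * h * M i + ln (1 + u i) \<le> ln (E i h)"
        using pos by (simp add: ln_mult)
      moreover have "u i - 2 * (u i)\<^sup>2 \<le> ln (1 + u i)" by (rule ln_lower_u[OF u_low])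
      ultimately show ?thesis by linarith
    qed
    have "(\<Sum>i\<in>UNIV. (1 / \<alpha> i) * (- \<alpha> i * h * M i + (u i - 2 * (u i)\<^sup>2)))
        \<le> (\<Sum>i\<in>UNIV. (1 / \<alpha> i) * ln (E i h))"
      using lnE \<alpha>_pos by (intro sum_mono mult_left_mono) (auto simp: less_imp_le)
    also have "\<dots> \<le> - K * ln (1 + h)" by (rule ineq_E[OF hm])
    also have "\<dots> \<le> - K * (h - h\<^sup>2 / 2)"
      using ln_lower_half[of h] h K_nn by (simp add: mult_left_mono)
    finally have X: "(\<Sum>i\<in>UNIV. (1 / \<alpha> i) * (- \<alpha> i * h * M i + (u i - 2 * (u i)\<^sup>2))) \<le> - K * (h - h\<^sup>2 / 2)" .
    have "(\<Sum>i\<in>UNIV. (1 / \<alpha> i) * (- \<alpha> i * h * M i + (u i - 2 * (u i)\<^sup>2)))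
        = (\<Sum>i\<in>UNIV. - h * M i + (1 / \<alpha> i) * (u i - 2 * (u i)\<^sup>2))"
      using \<alpha>_pos by (intro sum.cong refl) (simp add: field_simps less_imp_neq[symmetric])
    also have "\<dots> = - h * K + (\<Sum>i\<in>UNIV. (1 / \<alpha> i) * (u i - 2 * (u i)\<^sup>2))"
    proof -
      have "(\<Sum>i\<in>UNIV. - h * M i) = - h * K" by (simp only: sum_distrib_left[symmetric] sum_M)
      then show ?thesis by (simp only: sum.distrib)
    qed
    finally have "- h * K + (\<Sum>i\<in>UNIV. (1 / \<alpha> i) * (u i - 2 * (u i)\<^sup>2)) \<le> - K * (h - h\<^sup>2 / 2)"
      using X by simp
    then show "(\<Sum>i\<in>UNIV. (1 / \<alpha> i) * ((A i * h\<^sup>2 - B i * h^3) - 2 * (A i * h\<^sup>2 - B i * h^3)\<^sup>2)) \<le> K * h\<^sup>2 / 2"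
      unfolding u_def by (simp add: algebra_simps)
  qed simp
  moreover have "(\<Sum>i\<in>UNIV. (1 / \<alpha> i) * A i) = (\<Sum>i\<in>UNIV. \<alpha> i * Vr i) / 2"
  proof -
    have "(\<Sum>i\<in>UNIV. (1 / \<alpha> i) * A i) = (\<Sum>i\<in>UNIV. \<alpha> i * Vr i / 2)"
      unfolding A_def using \<alpha>_pos by (intro sum.cong refl) (simp add: power2_eq_square less_imp_neq[symmetric])
    then show ?thesis by (simp add: sum_divide_distrib)
  qed
  ultimately show ?thesis by simp
qed

end

lemma ereal_sum_real:
  fixes v :: "'i \<Rightarrow> ereal"
  assumes fin: "finite A" and eq: "(\<Sum>i\<in>A. v i) = ereal r"
  shows "(\<Sum>i\<in>A. real_of_ereal (v i)) = r"
proof -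
  have "\<bar>\<Sum>i\<in>A. v i\<bar> \<noteq> \<infinity>" using eq by simp
  then have fi: "\<forall>i\<in>A. \<bar>v i\<bar> \<noteq> \<infinity>" using fin by (simp add: sum_Inf)
  have "(\<Sum>i\<in>A. v i) = (\<Sum>i\<in>A. ereal (real_of_ereal (v i)))"
    using fi by (intro sum.cong refl) (simp add: ereal_real')
  then have "ereal r = ereal (\<Sum>i\<in>A. real_of_ereal (v i))" using eq by simp
  then show ?thesis by simp
qed

theorem lemma3p1:
  fixes c :: "real^'n^'k \<Rightarrow> real"
    and p :: real
    and \<rho> :: "'k \<Rightarrow> real^'n \<Rightarrow> real"
    and r \<alpha> :: "'k \<Rightarrow> real"
    and \<Phi> :: "'k \<Rightarrow> real^'n \<Rightarrow> ereal"
    and even_only :: bool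
    and m \<mu> :: "'k \<Rightarrow> (real^'n) measure"
  assumes p_pos: "p > 0"
    and c_hom: "homogeneous_cost p c"
    and c_meas: "c \<in> borel_measurable borel"
    and \<rho>_nonneg: "\<And>i x. \<rho> i x \<ge> 0"
    and \<rho>_meas: "\<And>i. \<rho> i \<in> borel_measurable borel"
    and \<rho>_hom: "\<And>i. homogeneous_density (r i) (\<rho> i)"
    and r_nonneg: "\<And>i. r i \<ge> 0"
    and \<alpha>_pos: "\<And>i. \<alpha> i > 0"
    and m_def: "\<And>i. m i = density lborel (\<lambda>x. ennreal (\<rho> i x))"
    and \<Phi>_adm: "admissible c \<Phi>"
    and \<Phi>_meas: "\<And>i. \<Phi> i \<in> borel_measurable borel"
    and \<Phi>_even: "even_only \<Longrightarrow> (\<forall>i x. \<Phi> i (- x) = \<Phi> i x)"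
    and \<Phi>_max: "\<And>V. admissible c V \<Longrightarrow> (\<forall>i. V i \<in> borel_measurable borel) \<Longrightarrow>
                   (even_only \<longrightarrow> (\<forall>i x. V i (- x) = V i x)) \<Longrightarrow> BS \<alpha> m V \<le> BS \<alpha> m \<Phi>"
    and BS_pos: "0 < BS \<alpha> m \<Phi>"
    and BS_fin: "BS \<alpha> m \<Phi> < \<infinity>"
    and \<mu>_def: "\<And>i. \<mu> i = density (m i) (\<lambda>x. expneg (\<alpha> i) (\<Phi> i x) /
                        (\<integral>\<^sup>+ y. expneg (\<alpha> i) (\<Phi> i y) \<partial>m i))"
  shows
    "(\<forall>i. integrable (\<mu> i) (\<lambda>x. real_of_ereal (\<Phi> i x)) \<and>
          integrable (\<mu> i) (\<lambda>x. (real_of_ereal (\<Phi> i x))\<^sup>2))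
     \<and> (\<Sum>i\<in>UNIV. \<integral>x. real_of_ereal (\<Phi> i x) \<partial>\<mu> i)
         = (\<Sum>i\<in>UNIV. (real CARD('n) + r i) / (p * \<alpha> i))
     \<and> (\<Sum>i\<in>UNIV. \<alpha> i * Var (\<mu> i) (\<lambda>x. real_of_ereal (\<Phi> i x)))
         \<le> (\<Sum>i\<in>UNIV. (real CARD('n) + r i) / (p * \<alpha> i))
     \<and> (\<forall>\<gamma> :: (real^'n^'k) measure.
          prob_space \<gamma> \<longrightarrow> sets \<gamma> = sets borel \<longrightarrow>
          (\<forall>i. distr \<gamma> borel (\<lambda>x. x $ i) = \<mu> i) \<longrightarrow>
          (AE x in \<gamma>. (\<Sum>i\<in>UNIV. \<Phi> i (x $ i)) = ereal (c x)) \<longrightarrow>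
            integrable \<gamma> c \<and> integrable \<gamma> (\<lambda>x. (c x)\<^sup>2)
            \<and> (\<integral>x. c x \<partial>\<gamma>) = (\<Sum>i\<in>UNIV. (real CARD('n) + r i) / (p * \<alpha> i))
            \<and> Var \<gamma> c \<le> (\<Sum>i\<in>UNIV. 1 / \<alpha> i) *
                 (\<Sum>i\<in>UNIV. \<alpha> i * Var (\<mu> i) (\<lambda>x. real_of_ereal (\<Phi> i x)))
            \<and> (Var \<gamma> c = (\<Sum>i\<in>UNIV. 1 / \<alpha> i) *
                 (\<Sum>i\<in>UNIV. \<alpha> i * Var (\<mu> i) (\<lambda>x. real_of_ereal (\<Phi> i x)))
               \<longleftrightarrow> (AE x in \<gamma>. \<forall>i j.
                     \<alpha> i * (real_of_ereal (\<Phi> i (x $ i)) - (\<integral>y. real_of_ereal (\<Phi> i y) \<partial>\<mu> i))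
                   = \<alpha> j * (real_of_ereal (\<Phi> j (x $ j)) - (\<integral>y. real_of_ereal (\<Phi> j y) \<partial>\<mu> j)))))"
proof -
  interpret L c p \<rho> r \<alpha> \<Phi> even_only m \<mu>
    by (rule L.intro[OF p_pos c_hom c_meas \<rho>_nonneg \<rho>_meas \<rho>_hom r_nonneg \<alpha>_pos m_def \<Phi>_adm \<Phi>_meas \<Phi>_even \<Phi>_max BS_pos BS_fin \<mu>_def])
  have phi: "(\<lambda>x. real_of_ereal (\<Phi> i x)) = \<phi> i" for i by (simp add: \<phi>_def fun_eq_iff)
  have P1: "\<forall>i. integrable (\<mu> i) (\<lambda>x. real_of_ereal (\<Phi> i x)) \<and> integrable (\<mu> i) (\<lambda>x. (real_of_ereal (\<Phi> i x))\<^sup>2)"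
    unfolding phi using mom(1,2) by (simp add: \<phi>_def)
  have P2: "(\<Sum>i\<in>UNIV. \<integral>x. real_of_ereal (\<Phi> i x) \<partial>\<mu> i) = (\<Sum>i\<in>UNIV. (real CARD('n) + r i) / (p * \<alpha> i))"
    using sum_M unfolding phi M_def K_def .
  have P3: "(\<Sum>i\<in>UNIV. \<alpha> i * Var (\<mu> i) (\<lambda>x. real_of_ereal (\<Phi> i x))) \<le> (\<Sum>i\<in>UNIV. (real CARD('n) + r i) / (p * \<alpha> i))"
    using var_bound unfolding phi Vr_def K_def .
  have P4: "prob_space \<gamma> \<longrightarrow> sets \<gamma> = sets borel \<longrightarrow>
          (\<forall>i. distr \<gamma> borel (\<lambda>x. x $ i) = \<mu> i) \<longrightarrow>
          (AE x in \<gamma>. (\<Sum>i\<in>UNIV. \<Phi> i (x $ i)) = ereal (c x)) \<longrightarrow>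
            integrable \<gamma> c \<and> integrable \<gamma> (\<lambda>x. (c x)\<^sup>2)
            \<and> (\<integral>x. c x \<partial>\<gamma>) = (\<Sum>i\<in>UNIV. (real CARD('n) + r i) / (p * \<alpha> i))
            \<and> Var \<gamma> c \<le> (\<Sum>i\<in>UNIV. 1 / \<alpha> i) *
                 (\<Sum>i\<in>UNIV. \<alpha> i * Var (\<mu> i) (\<lambda>x. real_of_ereal (\<Phi> i x)))
            \<and> (Var \<gamma> c = (\<Sum>i\<in>UNIV. 1 / \<alpha> i) *
                 (\<Sum>i\<in>UNIV. \<alpha> i * Var (\<mu> i) (\<lambda>x. real_of_ereal (\<Phi> i x)))
               \<longleftrightarrow> (AE x in \<gamma>. \<forall>i j.
                     \<alpha> i * (real_of_ereal (\<Phi> i (x $ i)) - (\<integral>y. real_of_ereal (\<Phi> i y) \<partial>\<mu> i))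
                   = \<alpha> j * (real_of_ereal (\<Phi> j (x $ j)) - (\<integral>y. real_of_ereal (\<Phi> j y) \<partial>\<mu> j))))"
    for \<gamma> :: "(real^'n^'k) measure"
  proof (intro impI)
    assume prob: "prob_space \<gamma>" and sets: "sets \<gamma> = sets borel"
      and marg: "\<forall>i. distr \<gamma> borel (\<lambda>x. x $ i) = \<mu> i"
      and AE: "AE x in \<gamma>. (\<Sum>i\<in>UNIV. \<Phi> i (x $ i)) = ereal (c x)"
    have AEc: "AE x in \<gamma>. c x = (\<Sum>i\<in>UNIV. \<phi> i (x $ i))"
      using AE by eventually_elim (simp add: \<phi>_def ereal_sum_real)
    have \<pi>: "(\<lambda>x::real^'n^'k. x $ i) \<in> borel_measurable borel" for i
      by (intro borel_measurable_continuous_onI continuous_on_component continuous_on_id)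
    note G = gamma_part[where \<pi>="\<lambda>i x. x $ i" and \<alpha>=\<alpha> and \<phi>=\<phi> and \<mu>=\<mu> and c=c, OF prob sets \<pi> marg[rule_format] \<phi>_meas mom(1) mom(2) c_meas \<alpha>_pos AEc]
    show "integrable \<gamma> c \<and> integrable \<gamma> (\<lambda>x. (c x)\<^sup>2)
            \<and> (\<integral>x. c x \<partial>\<gamma>) = (\<Sum>i\<in>UNIV. (real CARD('n) + r i) / (p * \<alpha> i))
            \<and> Var \<gamma> c \<le> (\<Sum>i\<in>UNIV. 1 / \<alpha> i) *
                 (\<Sum>i\<in>UNIV. \<alpha> i * Var (\<mu> i) (\<lambda>x. real_of_ereal (\<Phi> i x)))
            \<and> (Var \<gamma> c = (\<Sum>i\<in>UNIV. 1 / \<alpha> i) *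
                 (\<Sum>i\<in>UNIV. \<alpha> i * Var (\<mu> i) (\<lambda>x. real_of_ereal (\<Phi> i x)))
               \<longleftrightarrow> (AE x in \<gamma>. \<forall>i j.
                     \<alpha> i * (real_of_ereal (\<Phi> i (x $ i)) - (\<integral>y. real_of_ereal (\<Phi> i y) \<partial>\<mu> i))
                   = \<alpha> j * (real_of_ereal (\<Phi> j (x $ j)) - (\<integral>y. real_of_ereal (\<Phi> j y) \<partial>\<mu> j))))"
      unfolding phi \<phi>_def[symmetric] using G sum_M by (simp add: M_def K_def)
  qed
  show ?thesis using P1 P2 P3 P4 by blast
qed

end
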